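(* Let $g \in \mathbb{R}$. For all $p, q \in \Delta_d^{\mathcal{S}}$, \[ \ell^\Theta_{\mathrm C,\infty}\bigl(\mathcal G_g(p), \mathcal G_g(q)\bigr) \le \ell^\Theta_{\mathrm C,\infty}(p,q). \] In particular, $\mathcal G := \mathcal G_{\bar r^\pi}$ is non-expansive in $\ell^\Theta_{\mathrm C,\infty}$.
   Context: Finite MDP with state set $\mathcal{S}=\{1,\dots,m\}$, finite action set $\mathcal A$, deterministic reward function $R:\mathcal S\times\mathcal A\to[0,1]$, and a fixed policy $\pi$ inducing a transition matrix $P=(P_{ij})$ on $\mathcal S$ that is irreducible and aperiodic with stationary distribution $\mu$. For $i,j\in\mathcal S$, $R_{ij}$ denotes the (finite-valued, $[0,1]$-valued) random one-step reward conditioned on the transition $i\to j$. The gain is $\bar r^\pi=\sum_i\mu_i\sum_j P_{ij}\mathbb E[R_{ij}]$. For $g\in\mathbb R$, $\nu^{(g)}_{ij}:=\mathrm{Law}(R_{ij}-g)$. $\mathcal P_2(\mathbb R)$ is the set of probability laws on $\mathbb R$ with finite second moment; $\mathcal F^{\mathcal S}$ is the set of families $\eta=(\eta_i)_{i\in\mathcal S}$ with $\eta_i\in\mathcal P_2(\mathbb R)$. The operator $\mathcal T_g:\mathcal F^{\mathcal S}\to\mathcal F^{\mathcal S}$ is $(\mathcal T_g\eta)_i:=\sum_j P_{ij}(\nu^{(g)}_{ij}\ast\eta_j)$ ($\ast$ = convolution). Categorical support: $\Theta=\{\theta_1<\dots<\theta_d\}\subset\mathbb R$ with constant stride $\Delta=\theta_{k+1}-\theta_k>0$.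 $\Delta_d$ is the probability simplex in $\mathbb R^d$ and $\Delta_d^{\mathcal S}$ the set of families $p=(p_i)_{i\in\mathcal S}$, $p_i\in\Delta_d$. For $u\in\Delta_d$, $c\in\mathbb R$, $\eta^{u,c}:=\sum_{k=1}^d u_k\delta_{\theta_k+c}$, and for $p\in\Delta_d^{\mathcal S}$, $\eta^{p,c}:=(\eta^{p_i,c})_{i\in\mathcal S}$. The categorical projection $\Pi^{\Theta}_{\mathrm C}$ maps a point mass $\delta_x$ to $\delta_{\theta_1}$ if $x\le\theta_1$, to $\delta_{\theta_d}$ if $x\ge\theta_d$, and to $\frac{\theta_{k+1}-x}{\Delta}\delta_{\theta_k}+\frac{x-\theta_k}{\Delta}\delta_{\theta_{k+1}}$ if $\theta_k\le x\le\theta_{k+1}$; it is extended to laws $\eta$ by $\Pi^\Theta_{\mathrm C}\eta=\int\Pi^\Theta_{\mathrm C}\delta_x\,\eta(\mathrm dx)$, and applied statewise to families. For $g\in\mathbb R$ and $p\in\Delta_d^{\mathcal S}$, $\mathcal G_g(p)\in\Delta_d^{\mathcal S}$ is the unique family $q$ with $\Pi^\Theta_{\mathrm C}\bigl((\mathcal T_g\eta^{p,0})_i\bigr)=\eta^{q_i,0}$ for all $i$. Coordinate Cramér metric: for $u\in\Delta_d$, $F_u(\theta_k):=\sum_{j=1}^k u_j$; $\ell^\Theta_{\mathrm C}(u,v)^2:=\Delta\sum_{k=1}^{d-1}(F_u(\theta_k)-F_v(\theta_k))^2$; for $p,q\in\Delta_d^{\mathcal S}$, $\ell^\Theta_{\mathrm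 C,\infty}(p,q):=\max_{i}\ell^\Theta_{\mathrm C}(p_i,q_i)$. *)

theory Defs
  imports "HOL-Probability.Probability"
begin

text \<open>States are 1..m; the transition kernel of the policy is given row-wise as
  P i :: nat pmf (so P_ij = pmf (P i) j). Rewards R_ij are given by their laws R i j.\<close>

definition stoch_kernel :: "nat \<Rightarrow> (nat \<Rightarrow> nat pmf) \<Rightarrow> bool" where
  "stoch_kernel m P \<longleftrightarrow> (\<forall>i\<in>{1..m}. set_pmf (P i) \<subseteq> {1..m})"

primrec step_pmf :: "(nat \<Rightarrow> nat pmf) \<Rightarrow> nat \<Rightarrow> nat \<Rightarrow> nat pmf" where
  "step_pmf P 0 i = return_pmf i"
| "step_pmf P (Suc n) i = bind_pmf (P i) (\<lambda>j. step_pmf P n j)"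

definition irreducible_kernel :: "nat \<Rightarrow> (nat \<Rightarrow> nat pmf) \<Rightarrow> bool" where
  "irreducible_kernel m P \<longleftrightarrow>
     (\<forall>i\<in>{1..m}. \<forall>j\<in>{1..m}. \<exists>n>0. pmf (step_pmf P n i) j > 0)"

definition aperiodic_kernel :: "nat \<Rightarrow> (nat \<Rightarrow> nat pmf) \<Rightarrow> bool" where
  "aperiodic_kernel m P \<longleftrightarrow>
     (\<forall>i\<in>{1..m}. Gcd {n. n > 0 \<and> pmf (step_pmf P n i) i > 0} = (1::nat))"

definition stationary :: "nat \<Rightarrow> (nat \<Rightarrow> nat pmf) \<Rightarrow> (nat \<Rightarrow> real) \<Rightarrow> bool" where
  "stationary m P \<mu> \<longleftrightarrow> (\<forall>i\<in>{1..m}. \<mu> i \<ge> 0) \<and> (\<Sum>i\<in>{1..m}. \<mu> i) = 1 \<and>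
     (\<forall>j\<in>{1..m}. \<mu> j = (\<Sum>i\<in>{1..m}. \<mu> i * pmf (P i) j))"

definition gain :: "nat \<Rightarrow> (nat \<Rightarrow> nat pmf) \<Rightarrow> (nat \<Rightarrow> nat \<Rightarrow> real pmf) \<Rightarrow> real" where
  "gain m P R = (let \<mu> = (THE \<mu>. stationary m P \<mu> \<and> (\<forall>i. i \<notin> {1..m} \<longrightarrow> \<mu> i = 0)) in
     (\<Sum>i\<in>{1..m}. \<mu> i * (\<Sum>j\<in>{1..m}. pmf (P i) j * measure_pmf.expectation (R i j) (\<lambda>r. r))))"

definition nu :: "(nat \<Rightarrow> nat \<Rightarrow> real pmf) \<Rightarrow> real \<Rightarrow> nat \<Rightarrow> nat \<Rightarrow> real pmf" where
  "nu R g i j = map_pmf (\<lambda>r. r - g) (R i j)"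

definition conv_pmf :: "real pmf \<Rightarrow> real pmf \<Rightarrow> real pmf" where
  "conv_pmf \<nu> \<eta> = bind_pmf \<nu> (\<lambda>x. map_pmf (\<lambda>y. x + y) \<eta>)"

definition T_op :: "(nat \<Rightarrow> nat pmf) \<Rightarrow> (nat \<Rightarrow> nat \<Rightarrow> real pmf) \<Rightarrow> real
    \<Rightarrow> (nat \<Rightarrow> real pmf) \<Rightarrow> (nat \<Rightarrow> real pmf)" where
  "T_op P R g \<eta> i = bind_pmf (P i) (\<lambda>j. conv_pmf (nu R g i j) (\<eta> j))"

definition simplex_d :: "nat \<Rightarrow> (nat \<Rightarrow> real) set" where
  "simplex_d d = {u. (\<forall>k\<in>{1..d}. u k \<ge> 0) \<and> (\<Sum>k\<in>{1..d}. u k) = 1 \<and> (\<forall>k. k \<notin> {1..d} \<longrightarrow> u k = 0)}"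

definition simplex_fam :: "nat \<Rightarrow> nat \<Rightarrow> (nat \<Rightarrow> nat \<Rightarrow> real) set" where
  "simplex_fam m d = {p. \<forall>i\<in>{1..m}. p i \<in> simplex_d d}"

text \<open>Categorical law eta^{u,c} = sum_k u_k delta_{theta_k + c}.\<close>
definition cat_law :: "nat \<Rightarrow> (nat \<Rightarrow> real) \<Rightarrow> (nat \<Rightarrow> real) \<Rightarrow> real \<Rightarrow> real pmf" where
  "cat_law d \<theta> u c = embed_pmf (\<lambda>x. \<Sum>k\<in>{k\<in>{1..d}. \<theta> k + c = x}. u k)"

definition proj_point :: "nat \<Rightarrow> (nat \<Rightarrow> real) \<Rightarrow> real \<Rightarrow> real \<Rightarrow> real pmf" where
  "proj_point d \<theta> \<Delta> x =
     (if x \<le> \<theta> 1 then return_pmf (\<theta> 1)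
      else if x \<ge> \<theta> d then return_pmf (\<theta> d)
      else (let k = (GREATEST k. k \<in> {1..d} \<and> \<theta> k \<le> x) in
            map_pmf (\<lambda>b. if b then \<theta> (k+1) else \<theta> k)
                    (bernoulli_pmf ((x - \<theta> k) / \<Delta>))))"

definition proj_C :: "nat \<Rightarrow> (nat \<Rightarrow> real) \<Rightarrow> real \<Rightarrow> real pmf \<Rightarrow> real pmf" where
  "proj_C d \<theta> \<Delta> \<eta> = bind_pmf \<eta> (proj_point d \<theta> \<Delta>)"

definition G_op :: "nat \<Rightarrow> nat \<Rightarrow> (nat \<Rightarrow> real) \<Rightarrow> real \<Rightarrow> (nat \<Rightarrow> nat pmf)
    \<Rightarrow> (nat \<Rightarrow> nat \<Rightarrow> real pmf) \<Rightarrow> real \<Rightarrow> (nat \<Rightarrow> nat \<Rightarrow> real) \<Rightarrow> (nat \<Rightarrow> nat \<Rightarrow> real)" where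
  "G_op m d \<theta> \<Delta> P R g p = (THE q. q \<in> simplex_fam m d \<and> (\<forall>i. i \<notin> {1..m} \<longrightarrow> q i = (\<lambda>_. 0)) \<and>
      (\<forall>i\<in>{1..m}. proj_C d \<theta> \<Delta> (T_op P R g (\<lambda>j. cat_law d \<theta> (p j) 0) i) = cat_law d \<theta> (q i) 0))"

definition cdf_coord :: "(nat \<Rightarrow> real) \<Rightarrow> nat \<Rightarrow> real" where
  "cdf_coord u k = (\<Sum>j\<in>{1..k}. u j)"

definition cramer :: "nat \<Rightarrow> real \<Rightarrow> (nat \<Rightarrow> real) \<Rightarrow> (nat \<Rightarrow> real) \<Rightarrow> real" where
  "cramer d \<Delta> u v = sqrt (\<Delta> * (\<Sum>k\<in>{1..d-1}. (cdf_coord u k - cdf_coord v k)^2))"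

definition cramer_inf :: "nat \<Rightarrow> nat \<Rightarrow> real \<Rightarrow> (nat \<Rightarrow> nat \<Rightarrow> real) \<Rightarrow> (nat \<Rightarrow> nat \<Rightarrow> real) \<Rightarrow> real" where
  "cramer_inf m d \<Delta> p q = Max ((\<lambda>i. cramer d \<Delta> (p i) (q i)) ` {1..m})"

end

theory Submission
  imports Defs
begin


lemma theta_lin:
  assumes "\<forall>k. 1 \<le> k \<and> k < d \<longrightarrow> \<theta> (k+1) = \<theta> k + \<Delta>" "1 \<le> k" "k \<le> d"
  shows "\<theta> k = \<theta> 1 + (real k - 1) * \<Delta>"
  using assms(2,3)
proof (induction k)
  case 0 thus ?case by simp
next
  case (Suc k)
  show ?case
  proof (cases "k = 0")
    case True thus ?thesis by simp
  next
    case False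
    then have "\<theta> (k+1) = \<theta> k + \<Delta>" using assms(1) Suc.prems by auto
    moreover have "\<theta> k = \<theta> 1 + (real k - 1) * \<Delta>" using Suc False by auto
    ultimately show ?thesis by (simp add: algebra_simps)
  qed
qed

lemma cat_law_pmf:
  assumes "u \<in> simplex_d d"
  shows "pmf (cat_law d \<theta> u c) x = (\<Sum>k\<in>{k\<in>{1..d}. \<theta> k + c = x}. u k)"
proof -
  let ?f = "\<lambda>x. \<Sum>k\<in>{k\<in>{1..d}. \<theta> k + c = x}. u k"
  have nn: "\<And>x. 0 \<le> ?f x" using assms by (auto simp: simplex_d_def intro!: sum_nonneg)
  let ?A = "(\<lambda>k. \<theta> k + c) ` {1..d}"
  have z: "?f x = 0" if "x \<notin> ?A" for x
  proof -
    have "{k\<in>{1..d}. \<theta> k + c = x} = {}" using that by auto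
    then show ?thesis by (simp only:) simp
  qed
  have "(\<integral>\<^sup>+x. ennreal (?f x) \<partial>count_space UNIV) = (\<Sum>x\<in>?A. ennreal (?f x))"
    by (rule nn_integral_count_space') (use z in auto)
  also have "\<dots> = ennreal (\<Sum>x\<in>?A. ?f x)" using nn by simp
  also have "(\<Sum>x\<in>?A. ?f x) = (\<Sum>k\<in>{1..d}. u k)"
    by (rule sum.image_gen[symmetric]) auto
  also have "\<dots> = 1" using assms by (simp add: simplex_d_def)
  finally have "(\<integral>\<^sup>+x. ennreal (?f x) \<partial>count_space UNIV) = 1" by simp
  then show ?thesis unfolding cat_law_def using nn by (subst pmf_embed_pmf) auto
qed

lemma measure_bind_finite:
  assumes "finite B" "set_pmf M \<subseteq> B"
  shows "measure (measure_pmf (bind_pmf M N)) A = (\<Sum>x\<in>B. pmf M x * measure (measure_pmf (N x)) A)"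
proof -
  have "emeasure (measure_pmf (bind_pmf M N)) A = (\<integral>\<^sup>+x. emeasure (measure_pmf (N x)) A \<partial>M)"
    by simp
  also have "\<dots> = (\<Sum>x\<in>B. emeasure (measure_pmf (N x)) A * pmf M x)"
    using assms by (intro nn_integral_measure_pmf_support) (auto simp: set_pmf_eq)
  also have "\<dots> = (\<Sum>x\<in>B. ennreal (pmf M x * measure (measure_pmf (N x)) A))"
    by (intro sum.cong refl) (simp add: measure_pmf.emeasure_eq_measure ennreal_mult' mult.commute)
  also have "\<dots> = ennreal (\<Sum>x\<in>B. pmf M x * measure (measure_pmf (N x)) A)"
    by (intro sum_ennreal) auto
  finally show ?thesis
    by (simp add: measure_pmf.emeasure_eq_measure sum_nonneg)
qed

definition H01 :: "real \<Rightarrow> real" where "H01 z = max 0 (min 1 z)"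

lemma theta_eq_iff:
  fixes \<theta> :: "nat \<Rightarrow> real" and \<Delta> :: real
  assumes hth: "\<forall>k. 1 \<le> k \<and> k < d \<longrightarrow> \<theta> (k+1) = \<theta> k + \<Delta>" and "\<Delta> > 0"
    and "i \<in> {1..d}" "j \<in> {1..d}"
  shows "\<theta> i = \<theta> j \<longleftrightarrow> i = j"
  using theta_lin[OF hth, of i] theta_lin[OF hth, of j] assms(2-4) by auto

lemma theta_less_iff:
  fixes \<theta> :: "nat \<Rightarrow> real" and \<Delta> :: real
  assumes hth: "\<forall>k. 1 \<le> k \<and> k < d \<longrightarrow> \<theta> (k+1) = \<theta> k + \<Delta>" and "\<Delta> > 0"
    and "i \<in> {1..d}" "j \<in> {1..d}"
  shows "\<theta> i \<le> \<theta> j \<longleftrightarrow> i \<le> j"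
  using theta_lin[OF hth, of i] theta_lin[OF hth, of j] assms(2-4) by auto

lemma theta_mem_iff:
  fixes \<theta> :: "nat \<Rightarrow> real" and \<Delta> :: real
  assumes hth: "\<forall>k. 1 \<le> k \<and> k < d \<longrightarrow> \<theta> (k+1) = \<theta> k + \<Delta>" and "\<Delta> > 0"
    and "j \<in> {1..d}" "k \<le> d"
  shows "\<theta> j \<in> \<theta> ` {1..k} \<longleftrightarrow> j \<le> k"
proof
  assume "\<theta> j \<in> \<theta> ` {1..k}"
  then obtain i where "i \<in> {1..k}" "\<theta> j = \<theta> i" by auto
  then have "j = i" using theta_eq_iff[OF hth assms(2), of j i] assms(3,4) \<open>i \<in> {1..k}\<close> by auto
  then show "j \<le> k" using \<open>i \<in> {1..k}\<close> by auto
next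
  assume "j \<le> k" then show "\<theta> j \<in> \<theta> ` {1..k}" using assms(3) by auto
qed

lemma proj_point_cdf:
  fixes \<theta> :: "nat \<Rightarrow> real" and \<Delta> :: real
  assumes hth: "\<forall>k. 1 \<le> k \<and> k < d \<longrightarrow> \<theta> (k+1) = \<theta> k + \<Delta>" and D: "\<Delta> > 0"
    and "1 \<le> k" "k < d"
  shows "measure (measure_pmf (proj_point d \<theta> \<Delta> x)) (\<theta> ` {1..k}) = H01 ((\<theta> 1 + real k * \<Delta> - x) / \<Delta>)"
proof -
  have lin: "\<And>j. 1 \<le> j \<Longrightarrow> j \<le> d \<Longrightarrow> \<theta> j = \<theta> 1 + (real j - 1) * \<Delta>"
    using theta_lin[OF hth] by blast
  have mem: "\<And>j. j \<in> {1..d} \<Longrightarrow> \<theta> j \<in> \<theta> ` {1..k} \<longleftrightarrow> j \<le> k"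
    using theta_mem_iff[OF hth D] assms(4) by auto
  show ?thesis
  proof (cases "x \<le> \<theta> 1")
    case True
    have "\<Delta> \<le> real k * \<Delta>" using assms(3) D by simp
    then have "\<Delta> \<le> \<theta> 1 + real k * \<Delta> - x" using True by linarith
    then have "1 \<le> (\<theta> 1 + real k * \<Delta> - x) / \<Delta>" using D by (simp add: le_divide_eq)
    then have h: "H01 ((\<theta> 1 + real k * \<Delta> - x) / \<Delta>) = 1" by (simp add: H01_def)
    have pp: "proj_point d \<theta> \<Delta> x = return_pmf (\<theta> 1)" using True by (simp add: proj_point_def)
    have "\<theta> 1 \<in> \<theta> ` {1..k}" using assms(3) by auto
    then show ?thesis unfolding pp h by simp
  next
    case F1: False
    show ?thesis
    proof (cases "x \<ge> \<theta> d")
      case True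
      have "\<theta> d \<notin> \<theta> ` {1..k}" using mem[of d] assms by auto
      then have m: "measure (measure_pmf (return_pmf (\<theta> d))) (\<theta> ` {1..k}) = 0" by simp
      have "(\<theta> 1 + real k * \<Delta> - x) / \<Delta> \<le> 0"
      proof -
        have "\<theta> d = \<theta> 1 + (real d - 1) * \<Delta>" using lin[of d] assms by auto
        moreover have "real k * \<Delta> \<le> (real d - 1) * \<Delta>" using assms D by (intro mult_right_mono) auto
        ultimately have "\<theta> 1 + real k * \<Delta> - x \<le> 0" using True by linarith
        then show ?thesis using D by (simp add: divide_nonpos_pos)
      qed
      then have h: "H01 ((\<theta> 1 + real k * \<Delta> - x) / \<Delta>) = 0" by (simp add: H01_def)
      have pp: "proj_point d \<theta> \<Delta> x = return_pmf (\<theta> d)" using True F1 by (simp add: proj_point_def)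
      show ?thesis unfolding pp h m ..
    next
      case F2: False
      define P where "P = (\<lambda>j. j \<in> {1..d} \<and> \<theta> j \<le> x)"
      define k0 where "k0 = (GREATEST j. P j)"
      have P1: "P 1" using F1 assms unfolding P_def by auto
      have Pb: "\<And>y. P y \<Longrightarrow> y \<le> d" unfolding P_def by auto
      have Pk0: "P k0" unfolding k0_def by (rule GreatestI_nat[of P 1 d]) (use P1 Pb in auto)
      have k0max: "\<And>j. P j \<Longrightarrow> j \<le> k0" unfolding k0_def using Greatest_le_nat[of P _ d] Pb by blast
      have k0d: "k0 < d"
      proof (rule ccontr)
        assume "\<not> k0 < d" then have "k0 = d" using Pk0 unfolding P_def by auto
        then show False using Pk0 F2 unfolding P_def by auto
      qed
      have k01: "1 \<le> k0" using Pk0 unfolding P_def by auto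
      have xk0: "\<theta> k0 \<le> x" using Pk0 unfolding P_def by auto
      have xk1: "x < \<theta> (k0+1)"
      proof (rule ccontr)
        assume "\<not> x < \<theta> (k0+1)" then have "P (k0+1)" using k0d unfolding P_def by auto
        then show False using k0max by fastforce
      qed
      have th1: "\<theta> (k0+1) = \<theta> k0 + \<Delta>" using hth k01 k0d by auto
      define t where "t = (x - \<theta> k0) / \<Delta>"
      have t0: "0 \<le> t" "t \<le> 1" using xk0 xk1 th1 D unfolding t_def by (auto simp: divide_simps)
      have pp: "proj_point d \<theta> \<Delta> x = map_pmf (\<lambda>b. if b then \<theta> (k0+1) else \<theta> k0) (bernoulli_pmf t)"
      proof -
        have kk: "(GREATEST k. k \<in> {1..d} \<and> \<theta> k \<le> x) = k0" unfolding k0_def P_def by simp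
        have F2': "\<not> \<theta> d \<le> x" using F2 by simp
        show ?thesis unfolding proj_point_def if_not_P[OF F1] if_not_P[OF F2'] Let_def kk t_def ..
      qed
      have lk0: "\<theta> k0 = \<theta> 1 + (real k0 - 1) * \<Delta>" using lin[of k0] k01 k0d by auto
      have meas: "measure_pmf.prob (bernoulli_pmf t) S = (\<Sum>b\<in>S. pmf (bernoulli_pmf t) b)" for S
        by (rule measure_measure_pmf_finite) simp
      have m1: "\<theta> (k0+1) \<in> \<theta> ` {1..k} \<longleftrightarrow> k0 + 1 \<le> k" using mem[of "k0+1"] k0d by auto
      have m0: "\<theta> k0 \<in> \<theta> ` {1..k} \<longleftrightarrow> k0 \<le> k" using mem[of "k0"] k0d k01 by auto
      have mp: "measure (measure_pmf (proj_point d \<theta> \<Delta> x)) (\<theta> ` {1..k}) =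
          measure_pmf.prob (bernoulli_pmf t) ((\<lambda>b. if b then \<theta> (k0+1) else \<theta> k0) -` (\<theta> ` {1..k}))"
        unfolding pp by simp
      consider "k0 + 1 \<le> k" | "k0 = k" | "k < k0" by linarith
      then show ?thesis
      proof cases
        case 1
        have pre: "(\<lambda>b. if b then \<theta> (k0+1) else \<theta> k0) -` (\<theta> ` {1..k}) = UNIV"
          using m1 m0 1 by (auto split: if_splits)
        have "1 \<le> (\<theta> 1 + real k * \<Delta> - x) / \<Delta>"
        proof -
          have "real k0 + 1 \<le> real k" using 1 by linarith
          then have "(real k0 + 1) * \<Delta> \<le> real k * \<Delta>" using D by (intro mult_right_mono) auto
          then have "\<Delta> \<le> \<theta> 1 + real k * \<Delta> - x" using xk1 th1 lk0 by (simp add: algebra_simps)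
          then show ?thesis using D by (simp add: le_divide_eq)
        qed
        then have h: "H01 ((\<theta> 1 + real k * \<Delta> - x) / \<Delta>) = 1" by (simp add: H01_def)
        show ?thesis unfolding mp pre h by simp
      next
        case 2
        have pre: "(\<lambda>b. if b then \<theta> (k0+1) else \<theta> k0) -` (\<theta> ` {1..k}) = {False}"
          using m1 m0 2 by (auto split: if_splits)
        have a: "measure_pmf.prob (bernoulli_pmf t) {False} = 1 - t" using meas[of "{False}"] t0 by simp
        have "(\<theta> 1 + real k * \<Delta> - x) / \<Delta> = 1 - t"
        proof -
          have e: "\<theta> 1 + real k * \<Delta> - x = \<Delta> - (x - \<theta> k0)" using lk0 2 by (simp add: algebra_simps)
          show ?thesis unfolding e t_def using D by (simp add: diff_divide_distrib)
        qed
        then have h: "H01 ((\<theta> 1 + real k * \<Delta> - x) / \<Delta>) = 1 - t" using t0 by (simp add: H01_def)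
        show ?thesis unfolding mp pre h a ..
      next
        case 3
        have pre: "(\<lambda>b. if b then \<theta> (k0+1) else \<theta> k0) -` (\<theta> ` {1..k}) = {}"
          using m1 m0 3 by (auto split: if_splits)
        have "(\<theta> 1 + real k * \<Delta> - x) / \<Delta> \<le> 0"
        proof -
          have "real k \<le> real k0 - 1" using 3 by linarith
          then have "real k * \<Delta> \<le> (real k0 - 1) * \<Delta>" using D by (intro mult_right_mono) auto
          then have "\<theta> 1 + real k * \<Delta> - x \<le> 0" using xk0 lk0 by linarith
          then show ?thesis using D by (simp add: divide_nonpos_pos)
        qed
        then have h: "H01 ((\<theta> 1 + real k * \<Delta> - x) / \<Delta>) = 0" by (simp add: H01_def)
        show ?thesis unfolding mp pre h by simp
      qed
    qed
  qed
qed

lemma proj_point_set: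
  fixes \<theta> :: "nat \<Rightarrow> real" and \<Delta> :: real
  assumes hth: "\<forall>k. 1 \<le> k \<and> k < d \<longrightarrow> \<theta> (k+1) = \<theta> k + \<Delta>" and D: "\<Delta> > 0" and d1: "d \<ge> 1"
  shows "set_pmf (proj_point d \<theta> \<Delta> x) \<subseteq> \<theta> ` {1..d}"
proof (cases "x \<le> \<theta> 1")
  case True
  then show ?thesis using d1 by (auto simp: proj_point_def)
next
  case F1: False
  show ?thesis
  proof (cases "\<theta> d \<le> x")
    case True
    then show ?thesis using d1 F1 by (auto simp: proj_point_def)
  next
    case F2: False
    define P where "P = (\<lambda>j. j \<in> {1..d} \<and> \<theta> j \<le> x)"
    define k0 where "k0 = (GREATEST j. P j)"
    have P1: "P 1" using F1 d1 unfolding P_def by auto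
    have Pb: "\<And>y. P y \<Longrightarrow> y \<le> d" unfolding P_def by auto
    have Pk0: "P k0" unfolding k0_def by (rule GreatestI_nat[of P 1 d]) (use P1 Pb in auto)
    have k0d: "k0 < d"
    proof (rule ccontr)
      assume "\<not> k0 < d" then have "k0 = d" using Pk0 unfolding P_def by auto
      then show False using Pk0 F2 unfolding P_def by auto
    qed
    have k01: "1 \<le> k0" using Pk0 unfolding P_def by auto
    have kk: "(GREATEST k. k \<in> {1..d} \<and> \<theta> k \<le> x) = k0" unfolding k0_def P_def by simp
    have pp: "proj_point d \<theta> \<Delta> x = map_pmf (\<lambda>b. if b then \<theta> (k0+1) else \<theta> k0) (bernoulli_pmf ((x - \<theta> k0) / \<Delta>))"
      unfolding proj_point_def if_not_P[OF F1] if_not_P[OF F2] Let_def kk ..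
    have "\<theta> (k0+1) \<in> \<theta> ` {1..d}" "\<theta> k0 \<in> \<theta> ` {1..d}" using k01 k0d by auto
    then show ?thesis unfolding pp by auto
  qed
qed

lemma G_op_eq:
  fixes \<theta> :: "nat \<Rightarrow> real" and \<Delta> :: real
  assumes hth: "\<forall>k. 1 \<le> k \<and> k < d \<longrightarrow> \<theta> (k+1) = \<theta> k + \<Delta>" and D: "\<Delta> > 0" and d1: "d \<ge> 1"
    and ik: "i \<in> {1..m}" "k \<in> {1..d}"
  shows "G_op m d \<theta> \<Delta> P R g p i k = pmf (proj_C d \<theta> \<Delta> (T_op P R g (\<lambda>j. cat_law d \<theta> (p j) 0) i)) (\<theta> k)"
proof -
  define L where "L = (\<lambda>i. proj_C d \<theta> \<Delta> (T_op P R g (\<lambda>j. cat_law d \<theta> (p j) 0) i))"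
  have setL: "set_pmf (L i) \<subseteq> \<theta> ` {1..d}" for i
    unfolding L_def proj_C_def using proj_point_set[OF hth D d1] by auto
  have inj: "inj_on \<theta> {1..d}" using theta_eq_iff[OF hth D] by (auto simp: inj_on_def)
  define q where "q = (\<lambda>i k. if i \<in> {1..m} \<and> k \<in> {1..d} then pmf (L i) (\<theta> k) else 0)"
  let ?Q = "\<lambda>q. q \<in> simplex_fam m d \<and> (\<forall>i. i \<notin> {1..m} \<longrightarrow> q i = (\<lambda>_. 0)) \<and>
      (\<forall>i\<in>{1..m}. L i = cat_law d \<theta> (q i) 0)"
  have qs: "q i \<in> simplex_d d" if "i \<in> {1..m}" for i
  proof -
    have "(\<Sum>k\<in>{1..d}. q i k) = (\<Sum>k\<in>{1..d}. pmf (L i) (\<theta> k))" using that by (simp add: q_def)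
    also have "\<dots> = (\<Sum>x\<in>\<theta> ` {1..d}. pmf (L i) x)" using sum.reindex[OF inj, of "pmf (L i)"] by simp
    also have "\<dots> = 1" by (rule sum_pmf_eq_1) (use setL in auto)
    finally show ?thesis unfolding simplex_d_def by (auto simp: q_def)
  qed
  have catpmf: "pmf (cat_law d \<theta> u 0) (\<theta> k) = u k" if "u \<in> simplex_d d" "k \<in> {1..d}" for u k
  proof -
    have "{k'\<in>{1..d}. \<theta> k' + 0 = \<theta> k} = {k}" using theta_eq_iff[OF hth D] that(2) by auto
    then show ?thesis using cat_law_pmf[OF that(1), of \<theta> 0 "\<theta> k"] by simp
  qed
  have Qq: "?Q q"
  proof (intro conjI ballI allI impI)
    show "q \<in> simplex_fam m d" using qs by (auto simp: simplex_fam_def)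
    show "q i = (\<lambda>_. 0)" if "i \<notin> {1..m}" for i using that by (auto simp: q_def)
    show "L i = cat_law d \<theta> (q i) 0" if i: "i \<in> {1..m}" for i
    proof (rule pmf_eqI)
      fix x
      show "pmf (L i) x = pmf (cat_law d \<theta> (q i) 0) x"
      proof (cases "x \<in> \<theta> ` {1..d}")
        case True
        then obtain k where k: "k \<in> {1..d}" "x = \<theta> k" by auto
        then show ?thesis using catpmf[OF qs[OF i] k(1)] i by (simp add: q_def)
      next
        case False
        then have e: "{k'\<in>{1..d}. \<theta> k' + 0 = x} = {}" by auto
        have "pmf (cat_law d \<theta> (q i) 0) x = (\<Sum>k\<in>{k'\<in>{1..d}. \<theta> k' + 0 = x}. q i k)"
          by (rule cat_law_pmf[OF qs[OF i]])
        then have "pmf (cat_law d \<theta> (q i) 0) x = 0" unfolding e by simp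
        moreover have "pmf (L i) x = 0" using False setL[of i] by (auto simp: set_pmf_iff)
        ultimately show ?thesis by simp
      qed
    qed
  qed
  have uniq: "q' = q" if "?Q q'" for q'
  proof (rule ext, rule ext)
    fix i k
    show "q' i k = q i k"
    proof (cases "i \<in> {1..m}")
      case False then show ?thesis using that by (auto simp: q_def)
    next
      case i: True
      then have s: "q' i \<in> simplex_d d" using that by (auto simp: simplex_fam_def)
      show ?thesis
      proof (cases "k \<in> {1..d}")
        case True
        have "pmf (L i) (\<theta> k) = q' i k" using that i catpmf[OF s True] by auto
        then show ?thesis using i True by (simp add: q_def)
      next
        case False then show ?thesis using s by (auto simp: q_def simplex_d_def)
      qed
    qed
  qed
  have "G_op m d \<theta> \<Delta> P R g p = (THE q. ?Q q)" by (simp add: G_op_def L_def)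
  also have "(THE q. ?Q q) = q" by (rule the_equality) (use Qq uniq in auto)
  finally have "G_op m d \<theta> \<Delta> P R g p = q" .
  then show ?thesis using ik by (simp add: q_def L_def)
qed



lemma wjensen:
  fixes w y :: "'a \<Rightarrow> real"
  assumes "finite S" "\<And>a. a \<in> S \<Longrightarrow> 0 \<le> w a" "(\<Sum>a\<in>S. w a) \<le> 1"
  shows "(\<Sum>a\<in>S. w a * y a)^2 \<le> (\<Sum>a\<in>S. w a * (y a)^2)"
proof -
  define c where "c = (\<Sum>a\<in>S. w a * y a)"
  have "0 \<le> (\<Sum>a\<in>S. w a * (y a - c)^2)" using assms(2) by (intro sum_nonneg) auto
  also have "\<dots> = (\<Sum>a\<in>S. w a * (y a)^2) - 2 * c * (\<Sum>a\<in>S. w a * y a) + c^2 * (\<Sum>a\<in>S. w a)"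
    by (simp add: power2_eq_square algebra_simps sum.distrib sum_subtractf sum_distrib_left sum_distrib_right)
  also have "\<dots> \<le> (\<Sum>a\<in>S. w a * (y a)^2) - c^2"
  proof -
    have "c^2 * (\<Sum>a\<in>S. w a) \<le> c^2 * 1" using assms(3) by (intro mult_left_mono) auto
    then show ?thesis unfolding c_def[symmetric] by (simp add: power2_eq_square)
  qed
  finally show ?thesis unfolding c_def by simp
qed

lemma telesc: fixes n :: nat shows "(\<Sum>i\<in>{1..n}. (f (i+1) - f i :: real)) = f (n+1) - f 1"
  by (induction n) (auto simp: sum.atLeast1_atMost_eq)

lemma telesc2: fixes n :: nat shows "(\<Sum>i\<in>{1..n}. (f (Suc i) - f i :: real)) = f (Suc n) - f 1"
  using telesc[of f n] by simp


definition W :: "nat \<Rightarrow> nat \<Rightarrow> real \<Rightarrow> real" where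
  "W k l c = H01 (real k - real l + 1 - c) - H01 (real k - real l - c)"

lemma H01_mono: "x \<le> y \<Longrightarrow> H01 x \<le> H01 y" by (auto simp: H01_def)
lemma H01_bd: "0 \<le> H01 x" "H01 x \<le> 1" by (auto simp: H01_def)

lemma W_nonneg: "0 \<le> W k l c"
  unfolding W_def using H01_mono[of "real k - real l - c" "real k - real l + 1 - c"] by simp

lemma W_row: "(\<Sum>l\<in>{1..n}. W k l c) \<le> 1"
proof -
  have "(\<Sum>l\<in>{1..n}. W k l c) = (\<Sum>l\<in>{1..n}. (- H01 (real k - real (Suc l) + 1 - c)) - (- H01 (real k - real l + 1 - c)))"
    by (intro sum.cong refl) (simp add: W_def algebra_simps)
  also have "\<dots> = - H01 (real k - real (Suc n) + 1 - c) + H01 (real k - real 1 + 1 - c)"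
    by (subst telesc2[where f = "\<lambda>l. - H01 (real k - real l + 1 - c)"]) simp
  also have "\<dots> \<le> 1" using H01_bd[of "real k - real (Suc n) + 1 - c"] H01_bd[of "real k - real 1 + 1 - c"] by linarith
  finally show ?thesis .
qed

lemma W_col: "(\<Sum>k\<in>{1..n}. W k l c) \<le> 1"
proof -
  have "(\<Sum>k\<in>{1..n}. W k l c) = (\<Sum>k\<in>{1..n}. H01 (real (Suc k) - real l - c) - H01 (real k - real l - c))"
    by (intro sum.cong refl) (simp add: W_def algebra_simps)
  also have "\<dots> = H01 (real (Suc n) - real l - c) - H01 (real 1 - real l - c)"
    by (subst telesc2[where f = "\<lambda>k. H01 (real k - real l - c)"]) simp
  also have "\<dots> \<le> 1" using H01_bd[of "real (Suc n) - real l - c"] H01_bd[of "real 1 - real l - c"] by linarith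
  finally show ?thesis .
qed

lemma main_ineq:
  fixes S :: "'a set" and \<pi> :: "'a \<Rightarrow> real" and V :: "nat \<Rightarrow> nat \<Rightarrow> 'a \<Rightarrow> real" and D :: "'a \<Rightarrow> nat \<Rightarrow> real"
  assumes S: "finite S" and pi0: "\<And>a. a \<in> S \<Longrightarrow> 0 \<le> \<pi> a" and pi1: "(\<Sum>a\<in>S. \<pi> a) = 1"
    and V0: "\<And>k l a. 0 \<le> V k l a"
    and Vr: "\<And>k a. (\<Sum>l\<in>{1..n}. V k l a) \<le> 1"
    and Vc: "\<And>l a. (\<Sum>k\<in>{1..n}. V k l a) \<le> 1"
    and DC: "\<And>a. a \<in> S \<Longrightarrow> (\<Sum>l\<in>{1..n}. (D a l)^2) \<le> C"
  shows "(\<Sum>k\<in>{1..n}. (\<Sum>a\<in>S. \<pi> a * (\<Sum>l\<in>{1..n}. D a l * V k l a))^2) \<le> C"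
proof -
  have step1: "(\<Sum>a\<in>S. \<pi> a * (\<Sum>l\<in>{1..n}. D a l * V k l a))^2 \<le> (\<Sum>a\<in>S. \<pi> a * (\<Sum>l\<in>{1..n}. V k l a * (D a l)^2))" for k
  proof -
    have "(\<Sum>a\<in>S. \<pi> a * (\<Sum>l\<in>{1..n}. D a l * V k l a))^2 \<le> (\<Sum>a\<in>S. \<pi> a * (\<Sum>l\<in>{1..n}. D a l * V k l a)^2)"
      by (rule wjensen) (use S pi0 pi1 in auto)
    also have "\<dots> \<le> (\<Sum>a\<in>S. \<pi> a * (\<Sum>l\<in>{1..n}. V k l a * (D a l)^2))"
    proof (intro sum_mono mult_left_mono)
      fix a assume "a \<in> S"
      show "0 \<le> \<pi> a" using pi0 \<open>a \<in> S\<close> .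
      have "(\<Sum>l\<in>{1..n}. V k l a * D a l)^2 \<le> (\<Sum>l\<in>{1..n}. V k l a * (D a l)^2)"
        by (rule wjensen) (use V0 Vr in auto)
      then show "(\<Sum>l\<in>{1..n}. D a l * V k l a)^2 \<le> (\<Sum>l\<in>{1..n}. V k l a * (D a l)^2)"
        by (simp add: mult.commute)
    qed
    finally show ?thesis .
  qed
  have "(\<Sum>k\<in>{1..n}. (\<Sum>a\<in>S. \<pi> a * (\<Sum>l\<in>{1..n}. D a l * V k l a))^2)
      \<le> (\<Sum>k\<in>{1..n}. (\<Sum>a\<in>S. \<pi> a * (\<Sum>l\<in>{1..n}. V k l a * (D a l)^2)))"
    by (intro sum_mono step1)
  also have "\<dots> = (\<Sum>a\<in>S. \<pi> a * (\<Sum>l\<in>{1..n}. (D a l)^2 * (\<Sum>k\<in>{1..n}. V k l a)))"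
  proof -
    have e: "(\<Sum>k\<in>{1..n}. \<pi> a * (\<Sum>l\<in>{1..n}. V k l a * (D a l)^2)) = \<pi> a * (\<Sum>l\<in>{1..n}. (D a l)^2 * (\<Sum>k\<in>{1..n}. V k l a))" for a
    proof -
      have "(\<Sum>k\<in>{1..n}. \<pi> a * (\<Sum>l\<in>{1..n}. V k l a * (D a l)^2)) = \<pi> a * (\<Sum>k\<in>{1..n}. \<Sum>l\<in>{1..n}. V k l a * (D a l)^2)"
        by (simp add: sum_distrib_left)
      also have "(\<Sum>k\<in>{1..n}. \<Sum>l\<in>{1..n}. V k l a * (D a l)^2) = (\<Sum>l\<in>{1..n}. \<Sum>k\<in>{1..n}. V k l a * (D a l)^2)"
        by (rule sum.swap)
      also have "\<dots> = (\<Sum>l\<in>{1..n}. (D a l)^2 * (\<Sum>k\<in>{1..n}. V k l a))"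
        by (simp add: sum_distrib_left mult.commute)
      finally show ?thesis .
    qed
    have "(\<Sum>k\<in>{1..n}. (\<Sum>a\<in>S. \<pi> a * (\<Sum>l\<in>{1..n}. V k l a * (D a l)^2)))
        = (\<Sum>a\<in>S. \<Sum>k\<in>{1..n}. \<pi> a * (\<Sum>l\<in>{1..n}. V k l a * (D a l)^2))" by (rule sum.swap)
    then show ?thesis using e by simp
  qed
  also have "\<dots> \<le> (\<Sum>a\<in>S. \<pi> a * C)"
  proof (intro sum_mono mult_left_mono)
    fix a assume a: "a \<in> S"
    show "0 \<le> \<pi> a" using pi0 a .
    have "(\<Sum>l\<in>{1..n}. (D a l)^2 * (\<Sum>k\<in>{1..n}. V k l a)) \<le> (\<Sum>l\<in>{1..n}. (D a l)^2 * 1)"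
      by (intro sum_mono mult_left_mono Vc) auto
    then show "(\<Sum>l\<in>{1..n}. (D a l)^2 * (\<Sum>k\<in>{1..n}. V k l a)) \<le> C" using DC[OF a] by simp
  qed
  also have "\<dots> = C" using pi1 by (simp add: sum_distrib_right[symmetric])
  finally show ?thesis .
qed

lemma abel:
  fixes u f :: "nat \<Rightarrow> real"
  shows "(\<Sum>l\<in>{1..n}. u l * f l) = cdf_coord u n * f n + (\<Sum>l\<in>{1..<n}. cdf_coord u l * (f l - f (l+1)))"
proof (induction n)
  case 0 then show ?case by (simp add: cdf_coord_def)
next
  case (Suc n)
  have c: "cdf_coord u (Suc n) = cdf_coord u n + u (Suc n)" by (simp add: cdf_coord_def)
  have s: "(\<Sum>l\<in>{1..<Suc n}. cdf_coord u l * (f l - f (l+1))) =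
      (\<Sum>l\<in>{1..<n}. cdf_coord u l * (f l - f (l+1))) + cdf_coord u n * (f n - f (n+1))"
  proof (cases "n = 0")
    case True then show ?thesis by (simp add: cdf_coord_def)
  next
    case False then show ?thesis by (simp add: atLeastLessThanSuc)
  qed
  show ?case using Suc.IH unfolding c s by (simp add: algebra_simps)
qed



lemma cat_set:
  assumes "u \<in> simplex_d d"
  shows "set_pmf (cat_law d \<theta> u 0) \<subseteq> \<theta> ` {1..d}"
proof
  fix x assume "x \<in> set_pmf (cat_law d \<theta> u 0)"
  then have "pmf (cat_law d \<theta> u 0) x \<noteq> 0" by (simp add: set_pmf_iff)
  then have "(\<Sum>k\<in>{k\<in>{1..d}. \<theta> k + 0 = x}. u k) \<noteq> 0" using cat_law_pmf[OF assms, of \<theta> 0 x] by simp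
  then have "{k\<in>{1..d}. \<theta> k + 0 = x} \<noteq> {}" by (metis sum.empty)
  then show "x \<in> \<theta> ` {1..d}" by auto
qed

lemma cat_pmf_theta:
  fixes \<theta> :: "nat \<Rightarrow> real" and \<Delta> :: real
  assumes hth: "\<forall>k. 1 \<le> k \<and> k < d \<longrightarrow> \<theta> (k+1) = \<theta> k + \<Delta>" and D: "\<Delta> > 0"
    and "u \<in> simplex_d d" "k \<in> {1..d}"
  shows "pmf (cat_law d \<theta> u 0) (\<theta> k) = u k"
proof -
  have "{k'\<in>{1..d}. \<theta> k' + 0 = \<theta> k} = {k}" using theta_eq_iff[OF hth D] assms(4) by auto
  then show ?thesis using cat_law_pmf[OF assms(3), of \<theta> 0 "\<theta> k"] by simp
qed

lemma measure_bind_cat: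
  fixes \<theta> :: "nat \<Rightarrow> real" and \<Delta> :: real
  assumes hth: "\<forall>k. 1 \<le> k \<and> k < d \<longrightarrow> \<theta> (k+1) = \<theta> k + \<Delta>" and D: "\<Delta> > 0"
    and u: "u \<in> simplex_d d"
  shows "measure (measure_pmf (bind_pmf (cat_law d \<theta> u 0) N)) A = (\<Sum>l\<in>{1..d}. u l * measure (measure_pmf (N (\<theta> l))) A)"
proof -
  have inj: "inj_on \<theta> {1..d}" using theta_eq_iff[OF hth D] by (auto simp: inj_on_def)
  have "measure (measure_pmf (bind_pmf (cat_law d \<theta> u 0) N)) A =
      (\<Sum>x\<in>\<theta> ` {1..d}. pmf (cat_law d \<theta> u 0) x * measure (measure_pmf (N x)) A)"
    by (rule measure_bind_finite) (use cat_set[OF u] in auto)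
  also have "\<dots> = (\<Sum>l\<in>{1..d}. pmf (cat_law d \<theta> u 0) (\<theta> l) * measure (measure_pmf (N (\<theta> l))) A)"
    by (rule sum.reindex[OF inj, unfolded comp_def])
  also have "\<dots> = (\<Sum>l\<in>{1..d}. u l * measure (measure_pmf (N (\<theta> l))) A)"
    by (intro sum.cong refl) (simp add: cat_pmf_theta[OF hth D u])
  finally show ?thesis .
qed

definition Jp :: "(nat \<Rightarrow> nat pmf) \<Rightarrow> (nat \<Rightarrow> nat \<Rightarrow> real pmf) \<Rightarrow> real \<Rightarrow> nat \<Rightarrow> (nat \<times> real) pmf" where
  "Jp P R g i = bind_pmf (P i) (\<lambda>j. map_pmf (Pair j) (nu R g i j))"

lemma L_eq:
  "proj_C d \<theta> \<Delta> (T_op P R g (\<lambda>j. cat_law d \<theta> (p j) 0) i) =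
     bind_pmf (Jp P R g i) (\<lambda>a. bind_pmf (cat_law d \<theta> (p (fst a)) 0) (\<lambda>y. proj_point d \<theta> \<Delta> (snd a + y)))"
  by (simp add: proj_C_def T_op_def conv_pmf_def Jp_def bind_assoc_pmf bind_map_pmf map_pmf_def bind_return_pmf)

lemma Jp_set:
  assumes "stoch_kernel m P" "i \<in> {1..m}"
  shows "a \<in> set_pmf (Jp P R g i) \<Longrightarrow> fst a \<in> {1..m}"
proof -
  have s: "set_pmf (P i) \<subseteq> {1..m}" using assms by (auto simp: stoch_kernel_def)
  assume "a \<in> set_pmf (Jp P R g i)"
  then show ?thesis using s by (auto simp: Jp_def)
qed

lemma Jp_finite:
  assumes "stoch_kernel m P" "i \<in> {1..m}"
    and "\<forall>i\<in>{1..m}. \<forall>j\<in>{1..m}. finite (set_pmf (R i j)) \<and> set_pmf (R i j) \<subseteq> {0..1}"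
  shows "finite (set_pmf (Jp P R g i))"
proof -
  have sP: "set_pmf (P i) \<subseteq> {1..m}" using assms by (auto simp: stoch_kernel_def)
  then have fP: "finite (set_pmf (P i))" by (rule finite_subset) simp
  have "set_pmf (Jp P R g i) = (\<Union>j\<in>set_pmf (P i). Pair j ` ((\<lambda>r. r - g) ` set_pmf (R i j)))"
    by (simp add: Jp_def nu_def)
  moreover have "finite \<dots>" using fP sP assms(2,3) by (intro finite_UN_I finite_imageI) auto
  ultimately show ?thesis by simp
qed

lemma cdf_G:
  fixes \<theta> :: "nat \<Rightarrow> real" and \<Delta> :: real
  assumes hth: "\<forall>k. 1 \<le> k \<and> k < d \<longrightarrow> \<theta> (k+1) = \<theta> k + \<Delta>" and D: "\<Delta> > 0" and d1: "d \<ge> 1"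
    and sk: "stoch_kernel m P"
    and Rf: "\<forall>i\<in>{1..m}. \<forall>j\<in>{1..m}. finite (set_pmf (R i j)) \<and> set_pmf (R i j) \<subseteq> {0..1}"
    and p: "p \<in> simplex_fam m d" and i: "i \<in> {1..m}" and k: "1 \<le> k" "k < d"
  shows "cdf_coord (G_op m d \<theta> \<Delta> P R g p i) k =
    (\<Sum>a\<in>set_pmf (Jp P R g i). pmf (Jp P R g i) a *
        (\<Sum>l\<in>{1..d}. p (fst a) l * H01 ((\<theta> 1 + real k * \<Delta> - (snd a + \<theta> l)) / \<Delta>)))"
proof -
  define L where "L = proj_C d \<theta> \<Delta> (T_op P R g (\<lambda>j. cat_law d \<theta> (p j) 0) i)"
  have inj: "inj_on \<theta> {1..k}" using theta_eq_iff[OF hth D] k by (auto simp: inj_on_def)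
  have "cdf_coord (G_op m d \<theta> \<Delta> P R g p i) k = (\<Sum>k'\<in>{1..k}. pmf L (\<theta> k'))"
    unfolding cdf_coord_def L_def using G_op_eq[OF hth D d1 i] k by (intro sum.cong refl) auto
  also have "\<dots> = (\<Sum>x\<in>\<theta> ` {1..k}. pmf L x)"
    by (rule sum.reindex[OF inj, unfolded comp_def, symmetric])
  also have "\<dots> = measure (measure_pmf L) (\<theta> ` {1..k})"
    by (rule measure_measure_pmf_finite[symmetric]) simp
  also have "\<dots> = (\<Sum>a\<in>set_pmf (Jp P R g i). pmf (Jp P R g i) a *
      measure (measure_pmf (bind_pmf (cat_law d \<theta> (p (fst a)) 0) (\<lambda>y. proj_point d \<theta> \<Delta> (snd a + y)))) (\<theta> ` {1..k}))"
    unfolding L_def L_eq by (rule measure_bind_finite) (use Jp_finite[OF sk i Rf] in auto)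
  also have "\<dots> = (\<Sum>a\<in>set_pmf (Jp P R g i). pmf (Jp P R g i) a *
        (\<Sum>l\<in>{1..d}. p (fst a) l * H01 ((\<theta> 1 + real k * \<Delta> - (snd a + \<theta> l)) / \<Delta>)))"
  proof (intro sum.cong refl arg_cong2[where f = "(*)"])
    fix a assume a: "a \<in> set_pmf (Jp P R g i)"
    then have u: "p (fst a) \<in> simplex_d d" using Jp_set[OF sk i a] p by (auto simp: simplex_fam_def)
    show "measure (measure_pmf (bind_pmf (cat_law d \<theta> (p (fst a)) 0) (\<lambda>y. proj_point d \<theta> \<Delta> (snd a + y)))) (\<theta> ` {1..k}) =
        (\<Sum>l\<in>{1..d}. p (fst a) l * H01 ((\<theta> 1 + real k * \<Delta> - (snd a + \<theta> l)) / \<Delta>))"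
      unfolding measure_bind_cat[OF hth D u] using proj_point_cdf[OF hth D k] by simp
  qed
  finally show ?thesis .
qed



lemma W_eq:
  fixes \<theta> :: "nat \<Rightarrow> real" and \<Delta> :: real
  assumes hth: "\<forall>k. 1 \<le> k \<and> k < d \<longrightarrow> \<theta> (k+1) = \<theta> k + \<Delta>" and D: "\<Delta> > 0"
    and l: "1 \<le> l" "l < d"
  shows "H01 ((\<theta> 1 + real k * \<Delta> - (s + \<theta> l)) / \<Delta>) - H01 ((\<theta> 1 + real k * \<Delta> - (s + \<theta> (l+1))) / \<Delta>)
    = W k l (s / \<Delta>)"
proof -
  have t1: "\<theta> l = \<theta> 1 + (real l - 1) * \<Delta>" using theta_lin[OF hth, of l] l by auto
  have t2: "\<theta> (l+1) = \<theta> 1 + real l * \<Delta>" using theta_lin[OF hth, of "l+1"] l by auto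
  have e1: "(\<theta> 1 + real k * \<Delta> - (s + \<theta> l)) / \<Delta> = real k - real l + 1 - s / \<Delta>"
    unfolding t1 using D by (simp add: field_simps)
  have e2: "(\<theta> 1 + real k * \<Delta> - (s + \<theta> (l+1))) / \<Delta> = real k - real l - s / \<Delta>"
    unfolding t2 using D by (simp add: field_simps)
  show ?thesis unfolding e1 e2 W_def ..
qed

lemma key:
  fixes \<theta> :: "nat \<Rightarrow> real" and \<Delta> :: real
  assumes hth: "\<forall>k. 1 \<le> k \<and> k < d \<longrightarrow> \<theta> (k+1) = \<theta> k + \<Delta>" and D: "\<Delta> > 0" and d1: "d \<ge> 1"
    and m1: "m \<ge> 1"
    and sk: "stoch_kernel m P"
    and Rf: "\<forall>i\<in>{1..m}. \<forall>j\<in>{1..m}. finite (set_pmf (R i j)) \<and> set_pmf (R i j) \<subseteq> {0..1}"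
    and p: "p \<in> simplex_fam m d" and q: "q \<in> simplex_fam m d"
  shows "cramer_inf m d \<Delta> (G_op m d \<theta> \<Delta> P R g p) (G_op m d \<theta> \<Delta> P R g q) \<le> cramer_inf m d \<Delta> p q"
proof -
  define M where "M = cramer_inf m d \<Delta> p q"
  define C where "C = M^2 / \<Delta>"
  have fin: "finite {1..m}" "{1..m} \<noteq> {}" using m1 by auto
  define Dl where "Dl = (\<lambda>j l. cdf_coord (p j) l - cdf_coord (q j) l)"
  have M0: "0 \<le> M"
  proof -
    have "cramer d \<Delta> (p 1) (q 1) \<le> M" unfolding M_def cramer_inf_def using fin m1 by (intro Max_ge) auto
    moreover have "0 \<le> cramer d \<Delta> (p 1) (q 1)" unfolding cramer_def using D
      by (intro real_sqrt_ge_zero mult_nonneg_nonneg sum_nonneg) auto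
    ultimately show ?thesis by linarith
  qed
  have DC: "(\<Sum>l\<in>{1..d-1}. (Dl j l)^2) \<le> C" if j: "j \<in> {1..m}" for j
  proof -
    define X where "X = (\<Sum>l\<in>{1..d-1}. (Dl j l)^2)"
    have X0: "0 \<le> X" unfolding X_def by (intro sum_nonneg) auto
    have "sqrt (\<Delta> * X) \<le> M" unfolding M_def cramer_inf_def X_def Dl_def cramer_def[symmetric]
      using fin j by (intro Max_ge) auto
    then have "(sqrt (\<Delta> * X))^2 \<le> M^2" using X0 D by (intro power_mono) auto
    then have "\<Delta> * X \<le> M^2" using X0 D by simp
    then show ?thesis unfolding C_def X_def[symmetric] using D by (simp add: field_simps)
  qed
  have rowi: "cramer d \<Delta> (G_op m d \<theta> \<Delta> P R g p i) (G_op m d \<theta> \<Delta> P R g q i) \<le> M" if i: "i \<in> {1..m}" for i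
  proof -
    define J where "J = Jp P R g i"
    define S where "S = set_pmf J"
    have S: "finite S" unfolding S_def J_def by (rule Jp_finite[OF sk i Rf])
    have Sm: "\<And>a. a \<in> S \<Longrightarrow> fst a \<in> {1..m}" unfolding S_def J_def using Jp_set[OF sk i] by blast
    have pi1: "(\<Sum>a\<in>S. pmf J a) = 1" unfolding S_def by (rule sum_pmf_eq_1) (use S[unfolded S_def] in auto)
    have diff: "cdf_coord (G_op m d \<theta> \<Delta> P R g p i) k - cdf_coord (G_op m d \<theta> \<Delta> P R g q i) k
       = (\<Sum>a\<in>S. pmf J a * (\<Sum>l\<in>{1..d-1}. Dl (fst a) l * W k l (snd a / \<Delta>)))" if k: "k \<in> {1..d-1}" for k
    proof -
      have k': "1 \<le> k" "k < d" using k by auto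
      let ?f = "\<lambda>a l. H01 ((\<theta> 1 + real k * \<Delta> - (snd a + \<theta> l)) / \<Delta>)"
      have "cdf_coord (G_op m d \<theta> \<Delta> P R g p i) k - cdf_coord (G_op m d \<theta> \<Delta> P R g q i) k
         = (\<Sum>a\<in>S. pmf J a * ((\<Sum>l\<in>{1..d}. p (fst a) l * ?f a l) - (\<Sum>l\<in>{1..d}. q (fst a) l * ?f a l)))"
        unfolding cdf_G[OF hth D d1 sk Rf p i k'] cdf_G[OF hth D d1 sk Rf q i k'] S_def J_def
        by (simp add: sum_subtractf right_diff_distrib)
      also have "\<dots> = (\<Sum>a\<in>S. pmf J a * (\<Sum>l\<in>{1..d-1}. Dl (fst a) l * W k l (snd a / \<Delta>)))"
      proof (intro sum.cong refl arg_cong2[where f = "(*)"])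
        fix a assume a: "a \<in> S"
        have up: "p (fst a) \<in> simplex_d d" and uq: "q (fst a) \<in> simplex_d d"
          using Sm[OF a] p q by (auto simp: simplex_fam_def)
        have c1: "cdf_coord (p (fst a)) d = 1" "cdf_coord (q (fst a)) d = 1"
          using up uq by (auto simp: cdf_coord_def simplex_d_def)
        have iv: "{1..<d} = {1..d-1}" using d1 by auto
        have "(\<Sum>l\<in>{1..d}. p (fst a) l * ?f a l) - (\<Sum>l\<in>{1..d}. q (fst a) l * ?f a l)
            = (\<Sum>l\<in>{1..d-1}. Dl (fst a) l * (?f a l - ?f a (l+1)))"
          unfolding abel[of "p (fst a)"] abel[of "q (fst a)"] c1 iv Dl_def
          by (simp add: sum_subtractf left_diff_distrib)
        also have "\<dots> = (\<Sum>l\<in>{1..d-1}. Dl (fst a) l * W k l (snd a / \<Delta>))"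
        proof (rule sum.cong[OF refl])
          fix l assume "l \<in> {1..d-1}"
          then have l: "1 \<le> l" "l < d" by auto
          have e: "?f a l - ?f a (l+1) = W k l (snd a / \<Delta>)"
            by (rule W_eq[OF hth D l])
          show "Dl (fst a) l * (?f a l - ?f a (l+1)) = Dl (fst a) l * W k l (snd a / \<Delta>)"
            by (simp only: e)
        qed
        finally show "(\<Sum>l\<in>{1..d}. p (fst a) l * ?f a l) - (\<Sum>l\<in>{1..d}. q (fst a) l * ?f a l)
            = (\<Sum>l\<in>{1..d-1}. Dl (fst a) l * W k l (snd a / \<Delta>))" .
      qed
      finally show ?thesis .
    qed
    have "(\<Sum>k\<in>{1..d-1}. (cdf_coord (G_op m d \<theta> \<Delta> P R g p i) k - cdf_coord (G_op m d \<theta> \<Delta> P R g q i) k)^2)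
        = (\<Sum>k\<in>{1..d-1}. (\<Sum>a\<in>S. pmf J a * (\<Sum>l\<in>{1..d-1}. Dl (fst a) l * W k l (snd a / \<Delta>)))^2)"
      using diff by (intro sum.cong refl) auto
    also have "\<dots> \<le> C"
      by (rule main_ineq[where V = "\<lambda>k l a. W k l (snd a / \<Delta>)" and D = "\<lambda>a l. Dl (fst a) l"])
        (use S pi1 W_nonneg W_row W_col DC Sm in auto)
    finally have le: "(\<Sum>k\<in>{1..d-1}. (cdf_coord (G_op m d \<theta> \<Delta> P R g p i) k - cdf_coord (G_op m d \<theta> \<Delta> P R g q i) k)^2) \<le> C" .
    have "cramer d \<Delta> (G_op m d \<theta> \<Delta> P R g p i) (G_op m d \<theta> \<Delta> P R g q i) \<le> sqrt (\<Delta> * C)"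
      unfolding cramer_def using le D by (intro real_sqrt_le_mono mult_left_mono) auto
    also have "\<Delta> * C = M^2" unfolding C_def using D by simp
    also have "sqrt (M^2) = M" using M0 by simp
    finally show ?thesis .
  qed
  show ?thesis unfolding M_def[symmetric] unfolding cramer_inf_def
    using fin rowi by (intro Max.boundedI) auto
qed

theorem theorem1:
  fixes m d :: nat and P :: "nat \<Rightarrow> nat pmf" and R :: "nat \<Rightarrow> nat \<Rightarrow> real pmf"
    and \<theta> :: "nat \<Rightarrow> real" and \<Delta> g :: real and p q :: "nat \<Rightarrow> nat \<Rightarrow> real"
  assumes "m \<ge> 1"
    and "stoch_kernel m P" and "irreducible_kernel m P" and "aperiodic_kernel m P"
    and "\<forall>i\<in>{1..m}. \<forall>j\<in>{1..m}. finite (set_pmf (R i j)) \<and> set_pmf (R i j) \<subseteq> {0..1}"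
    and "d \<ge> 1" and "\<Delta> > 0" and "\<forall>k. 1 \<le> k \<and> k < d \<longrightarrow> \<theta> (k+1) = \<theta> k + \<Delta>"
    and "p \<in> simplex_fam m d" and "q \<in> simplex_fam m d"
  shows "cramer_inf m d \<Delta> (G_op m d \<theta> \<Delta> P R g p) (G_op m d \<theta> \<Delta> P R g q)
           \<le> cramer_inf m d \<Delta> p q \<and>
         cramer_inf m d \<Delta> (G_op m d \<theta> \<Delta> P R (gain m P R) p) (G_op m d \<theta> \<Delta> P R (gain m P R) q)
           \<le> cramer_inf m d \<Delta> p q"
  by (intro conjI key[OF assms(8,7,6,1,2,5,9,10)])

end
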